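(* Let $|\zeta\rangle$ be an $n$-qubit pure state and $\rho$ an $n$-qubit state. Let $x,z$ be the measurement outcomes of the state-based classical shadow procedure run on input $\rho$ with auxiliary state $|\zeta\rangle$. Then for all $x,z\in\{0,1\}^n$, $$\Pr[x,z\mid\zeta]=\frac{1}{2^n}\langle\zeta^*_{x,z}|\rho|\zeta^*_{x,z}\rangle.$$
   Context: State-based classical shadow procedure: registers $R_1,R_2$ of $n$ qubits; $R_1$ holds $\rho$, $R_2$ holds $|\zeta\rangle$; apply $n$ CNOT gates qubit by qubit with $R_1$ qubits as controls and $R_2$ qubits as targets, then $H^{\otimes n}$ on $R_1$, then measure $R_1$ and $R_2$ in the computational basis obtaining $z$ and $x$ respectively. $|\zeta_{x,z}\rangle=X^xZ^z|\zeta\rangle$ with $X^x=\bigotimes_jX^{x_j}$, $Z^z=\bigotimes_jZ^{z_j}$, and $|\zeta^*_{x,z}\rangle$ is its entrywise complex conjugate in the computational basis. *)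

theory Defs
  imports Complex_Main
begin

text \<open>Computational basis states of an n-qubit register are indexed by bit strings,
  represented as boolean lists of length n (entry j = value of qubit j).
  Vectors are functions from bit strings to complex amplitudes, operators on one
  register are kernels (matrix entries), operators on the joint register
  R1 R2 are kernels indexed by pairs (bits of R1, bits of R2).\<close>

definition bitstrings :: "nat \<Rightarrow> bool list set" where
  "bitstrings n = {xs. length xs = n}"

type_synonym vec = "bool list \<Rightarrow> complex"
type_synonym op1 = "bool list \<Rightarrow> bool list \<Rightarrow> complex"
type_synonym op2 = "bool list \<times> bool list \<Rightarrow> bool list \<times> bool list \<Rightarrow> complex"

definition is_pure_state :: "nat \<Rightarrow> vec \<Rightarrow> bool" where
  "is_pure_state n \<psi> \<longleftrightarrow> (\<Sum>b\<in>bitstrings n. (cmod (\<psi> b))\<^sup>2) = 1"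

definition expval :: "nat \<Rightarrow> op1 \<Rightarrow> vec \<Rightarrow> complex" where
  "expval n A v = (\<Sum>a\<in>bitstrings n. \<Sum>b\<in>bitstrings n. cnj (v a) * A a b * v b)"

definition is_density :: "nat \<Rightarrow> op1 \<Rightarrow> bool" where
  "is_density n \<rho> \<longleftrightarrow>
     (\<forall>a\<in>bitstrings n. \<forall>b\<in>bitstrings n. \<rho> b a = cnj (\<rho> a b)) \<and>
     (\<forall>v. 0 \<le> Re (expval n \<rho> v)) \<and>
     (\<Sum>a\<in>bitstrings n. \<rho> a a) = 1"

definition id2 :: op2 where
  "id2 = (\<lambda>p q. if p = q then 1 else 0)"

definition mult2 :: "nat \<Rightarrow> op2 \<Rightarrow> op2 \<Rightarrow> op2" where
  "mult2 n A B = (\<lambda>p q. \<Sum>r\<in>bitstrings n \<times> bitstrings n. A p r * B r q)"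

definition adj2 :: "op2 \<Rightarrow> op2" where
  "adj2 A = (\<lambda>p q. cnj (A q p))"

definition cnot_gate :: "nat \<Rightarrow> op2" where
  "cnot_gate j = (\<lambda>(c, d) (a, b).
     if c = a \<and> d = b[j := (b ! j \<noteq> a ! j)] then 1 else 0)"

definition cnot_layer :: "nat \<Rightarrow> op2" where
  "cnot_layer n = fold (\<lambda>j U. mult2 n (cnot_gate j) U) [0..<n] id2"

definition hadamard1 :: "bool \<Rightarrow> bool \<Rightarrow> complex" where
  "hadamard1 c a = (if c \<and> a then -1 else 1) / complex_of_real (sqrt 2)"

definition hadamard_n :: "nat \<Rightarrow> op1" where
  "hadamard_n n = (\<lambda>c a. \<Prod>j<n. hadamard1 (c ! j) (a ! j))"

definition on_R1 :: "op1 \<Rightarrow> op2" where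
  "on_R1 A = (\<lambda>(c, d) (a, b). A c a * (if d = b then 1 else 0))"

definition shadow_circuit :: "nat \<Rightarrow> op2" where
  "shadow_circuit n = mult2 n (on_R1 (hadamard_n n)) (cnot_layer n)"

definition input_state :: "op1 \<Rightarrow> vec \<Rightarrow> op2" where
  "input_state \<rho> \<zeta> = (\<lambda>(a, b) (a', b'). \<rho> a a' * \<zeta> b * cnj (\<zeta> b'))"

text \<open>Born-rule probability of outcome z on R1 and x on R2.\<close>
definition shadow_prob :: "nat \<Rightarrow> op1 \<Rightarrow> vec \<Rightarrow> bool list \<Rightarrow> bool list \<Rightarrow> real" where
  "shadow_prob n \<rho> \<zeta> x z =
     Re (mult2 n (mult2 n (shadow_circuit n) (input_state \<rho> \<zeta>)) (adj2 (shadow_circuit n))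
           (z, x) (z, x))"

definition pauliX :: "bool list \<Rightarrow> vec \<Rightarrow> vec" where
  "pauliX x \<psi> = (\<lambda>b. \<psi> (map2 (\<noteq>) b x))"

definition pauliZ :: "bool list \<Rightarrow> vec \<Rightarrow> vec" where
  "pauliZ z \<psi> = (\<lambda>b. (-1) ^ card {j. j < length b \<and> z ! j \<and> b ! j} * \<psi> b)"

definition zeta_xz :: "vec \<Rightarrow> bool list \<Rightarrow> bool list \<Rightarrow> vec" where
  "zeta_xz \<zeta> x z = pauliX x (pauliZ z \<zeta>)"

definition conj_vec :: "vec \<Rightarrow> vec" where
  "conj_vec \<psi> = (\<lambda>b. cnj (\<psi> b))"

end

theory Submission
  imports Defs
begin

definition xl :: "bool list \<Rightarrow> bool list \<Rightarrow> bool list" where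
  "xl a b = map2 (\<noteq>) a b"

lemma xl_len[simp]: "length a = n \<Longrightarrow> length b = n \<Longrightarrow> length (xl a b) = n"
  by (simp add: xl_def)

lemma xl_nth[simp]: "length a = n \<Longrightarrow> length b = n \<Longrightarrow> j < n \<Longrightarrow> xl a b ! j = (a ! j \<noteq> b ! j)"
  by (simp add: xl_def)

lemma xl_comm: "length a = length b \<Longrightarrow> xl a b = xl b a"
  by (rule nth_equalityI) auto

lemma xl_inv: "length a = length b \<Longrightarrow> xl (xl a b) b = a"
  by (rule nth_equalityI) auto

lemma xl_eq_iff: "length d = n \<Longrightarrow> length a = n \<Longrightarrow> length b = n \<Longrightarrow>
   (d = xl b a) = (b = xl d a)"
  by (metis xl_inv xl_len)

lemma fin_bs[simp]: "finite (bitstrings n)"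
proof -
  have "bitstrings n = {xs. set xs \<subseteq> (UNIV::bool set) \<and> length xs = n}"
    by (auto simp: bitstrings_def)
  thus ?thesis using finite_lists_length_eq[of "UNIV::bool set" n] by simp
qed

definition flipk :: "nat \<Rightarrow> bool list \<Rightarrow> bool list \<Rightarrow> bool list" where
  "flipk k a b = map (\<lambda>i. if i < k then b ! i \<noteq> a ! i else b ! i) [0..<length b]"

lemma flipk_len[simp]: "length (flipk k a b) = length b"
  by (simp add: flipk_def)

lemma flipk_step: "k < length b \<Longrightarrow>
  (flipk k a b)[k := (flipk k a b ! k \<noteq> a ! k)] = flipk (Suc k) a b"
  by (rule nth_equalityI) (auto simp: flipk_def nth_list_update)

lemma flipk_0: "flipk 0 a b = b"
  by (rule nth_equalityI) (auto simp: flipk_def)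

lemma flipk_full: "length a = length b \<Longrightarrow> flipk (length b) a b = xl b a"
  by (rule nth_equalityI) (auto simp: flipk_def)

lemma fold_layer:
  assumes "k \<le> n" "a \<in> bitstrings n" "b \<in> bitstrings n"
  shows "fold (\<lambda>j U. mult2 n (cnot_gate j) U) [0..<k] id2 (c, d) (a, b)
        = (if c = a \<and> d = flipk k a b then 1 else 0)"
  using assms(1)
proof (induction k arbitrary: c d)
  case 0
  then show ?case by (simp add: id2_def flipk_0)
next
  case (Suc k)
  let ?F = "fold (\<lambda>j U. mult2 n (cnot_gate j) U) [0..<k] id2"
  have IH: "\<And>r. ?F r (a, b) = (if r = (a, flipk k a b) then 1 else 0)"
    using Suc by (auto simp: prod_eq_iff)
  have mem: "(a, flipk k a b) \<in> bitstrings n \<times> bitstrings n"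
    using assms by (simp add: bitstrings_def)
  have "fold (\<lambda>j U. mult2 n (cnot_gate j) U) [0..<Suc k] id2 = mult2 n (cnot_gate k) ?F"
    by simp
  hence "fold (\<lambda>j U. mult2 n (cnot_gate j) U) [0..<Suc k] id2 (c, d) (a, b)
       = (\<Sum>r\<in>bitstrings n \<times> bitstrings n. cnot_gate k (c, d) r * (if r = (a, flipk k a b) then 1 else 0))"
    by (simp add: mult2_def[of n "cnot_gate k"] IH)
  also have "\<dots> = cnot_gate k (c, d) (a, flipk k a b)"
    using mem by (simp add: if_distrib sum.delta del: mem_Sigma_iff cong: if_cong)
  also have "\<dots> = (if c = a \<and> d = flipk (Suc k) a b then 1 else 0)"
  proof -
    have "(flipk k a b)[k := (flipk k a b ! k \<noteq> a ! k)] = flipk (Suc k) a b"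
      using flipk_step[of k b a] Suc.prems assms by (simp add: bitstrings_def)
    then show ?thesis by (simp add: cnot_gate_def)
  qed
  finally show ?case .
qed

lemma cnot_layer_entry:
  assumes "a \<in> bitstrings n" "b \<in> bitstrings n"
  shows "cnot_layer n (c, d) (a, b) = (if c = a \<and> d = xl b a then 1 else 0)"
  using fold_layer[OF order_refl assms, of c d] assms flipk_full[of a b]
  by (simp add: cnot_layer_def bitstrings_def)

lemma circuit_entry:
  assumes "a \<in> bitstrings n" "b \<in> bitstrings n"
  shows "shadow_circuit n (c, d) (a, b) = hadamard_n n c a * (if d = xl b a then 1 else 0)"
proof -
  have IH: "\<And>r. cnot_layer n r (a, b) = (if r = (a, xl b a) then 1 else 0)"
    using cnot_layer_entry[OF assms] by (auto simp: prod_eq_iff)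
  have mem: "(a, xl b a) \<in> bitstrings n \<times> bitstrings n"
    using assms by (simp add: bitstrings_def)
  have "shadow_circuit n (c, d) (a, b)
     = (\<Sum>r\<in>bitstrings n \<times> bitstrings n. on_R1 (hadamard_n n) (c, d) r * (if r = (a, xl b a) then 1 else 0))"
    by (simp add: shadow_circuit_def mult2_def IH)
  also have "\<dots> = on_R1 (hadamard_n n) (c, d) (a, xl b a)"
    using mem by (simp add: if_distrib sum.delta del: mem_Sigma_iff cong: if_cong)
  finally show ?thesis by (simp add: on_R1_def)
qed

definition sgb :: "bool \<Rightarrow> complex" where "sgb P = (if P then -1 else 1)"

lemma cnj_sgb[simp]: "cnj (sgb P) = sgb P" by (simp add: sgb_def)

lemma sg_prod: "length w = n \<Longrightarrow>
  (-1::complex) ^ card {j. j < length w \<and> z ! j \<and> w ! j} = (\<Prod>j<n. sgb (z ! j \<and> w ! j))"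
proof -
  assume l: "length w = n"
  have "(\<Prod>j<n. sgb (z ! j \<and> w ! j)) = (\<Prod>j<n. if z ! j \<and> w ! j then -1 else 1)"
    by (simp add: sgb_def)
  also have "\<dots> = (-1) ^ card ({..<n} \<inter> {j. z ! j \<and> w ! j})"
    by (simp add: prod.If_cases)
  also have "{..<n} \<inter> {j. z ! j \<and> w ! j} = {j. j < length w \<and> z ! j \<and> w ! j}"
    using l by auto
  finally show ?thesis by simp
qed

lemma had1: "hadamard1 c a * cnj (hadamard1 c b) = 1/2 * (sgb (c \<and> (a \<noteq> x)) * sgb (c \<and> (b \<noteq> x)))"
proof -
  have s: "complex_of_real (sqrt 2) * complex_of_real (sqrt 2) = 2"
    by (simp flip: of_real_mult)
  have "hadamard1 c a * cnj (hadamard1 c b) = sgb (c \<and> a) * sgb (c \<and> b) / (complex_of_real (sqrt 2) * complex_of_real (sqrt 2))"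
    by (simp add: hadamard1_def sgb_def)
  also have "\<dots> = 1/2 * (sgb (c \<and> (a \<noteq> x)) * sgb (c \<and> (b \<noteq> x)))"
    unfolding s by (cases c; cases a; cases b; cases x) (simp_all add: sgb_def)
  finally show ?thesis .
qed

lemma had: "length a = n \<Longrightarrow> length b = n \<Longrightarrow> length x = n \<Longrightarrow>
  hadamard_n n z a * cnj (hadamard_n n z b)
  = (1/2^n) * ((\<Prod>j<n. sgb (z!j \<and> xl a x ! j)) * (\<Prod>j<n. sgb (z!j \<and> xl b x ! j)))"
proof -
  assume l: "length a = n" "length b = n" "length x = n"
  have "hadamard_n n z a * cnj (hadamard_n n z b)
     = (\<Prod>j<n. hadamard1 (z!j) (a!j) * cnj (hadamard1 (z!j) (b!j)))"
    by (simp add: hadamard_n_def prod.distrib)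
  also have "\<dots> = (\<Prod>j<n. 1/2 * (sgb (z!j \<and> xl a x ! j) * sgb (z!j \<and> xl b x ! j)))"
  proof (rule prod.cong[OF refl])
    fix j assume "j \<in> {..<n}"
    then have e: "xl a x ! j = (a!j \<noteq> x!j)" "xl b x ! j = (b!j \<noteq> x!j)" using l by auto
    show "hadamard1 (z!j) (a!j) * cnj (hadamard1 (z!j) (b!j)) = 1/2 * (sgb (z!j \<and> xl a x ! j) * sgb (z!j \<and> xl b x ! j))"
      unfolding e by (rule had1)
  qed
  also have "\<dots> = (1/2^n) * ((\<Prod>j<n. sgb (z!j \<and> xl a x ! j)) * (\<Prod>j<n. sgb (z!j \<and> xl b x ! j)))"
    unfolding prod.distrib by (simp add: power_one_over)
  finally show ?thesis .
qed

lemma hermitian_real: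
  assumes "\<forall>a\<in>bitstrings n. \<forall>b\<in>bitstrings n. \<rho> b a = cnj (\<rho> a b)"
  shows "cnj (expval n \<rho> v) = expval n \<rho> v"
proof -
  have "cnj (expval n \<rho> v) = (\<Sum>a\<in>bitstrings n. \<Sum>b\<in>bitstrings n. v a * \<rho> b a * cnj (v b))"
    unfolding expval_def complex_cnj_mult cnj_sum complex_cnj_cnj
  proof (intro sum.cong refl)
    fix a b assume "a \<in> bitstrings n" "b \<in> bitstrings n"
    with assms have "\<rho> b a = cnj (\<rho> a b)" by blast
    then show "v a * cnj (\<rho> a b) * cnj (v b) = v a * \<rho> b a * cnj (v b)" by simp
  qed
  also have "\<dots> = (\<Sum>b\<in>bitstrings n. \<Sum>a\<in>bitstrings n. v a * \<rho> b a * cnj (v b))"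
    by (rule sum.swap)
  also have "\<dots> = expval n \<rho> v"
    unfolding expval_def by (simp add: mult_ac)
  finally show ?thesis .
qed

theorem proposition4:
  fixes n :: nat and \<rho> :: op1 and \<zeta> :: vec and x z :: "bool list"
  assumes "is_density n \<rho>"
    and "is_pure_state n \<zeta>"
    and "x \<in> bitstrings n" and "z \<in> bitstrings n"
  shows "complex_of_real (shadow_prob n \<rho> \<zeta> x z)
           = (1 / 2 ^ n) * expval n \<rho> (conj_vec (zeta_xz \<zeta> x z))"
proof -
  define B where "B = bitstrings n"
  define U where "U = shadow_circuit n"
  define \<sigma> where "\<sigma> = input_state \<rho> \<zeta>"
  define H where "H = hadamard_n n"
  define v where "v = conj_vec (zeta_xz \<zeta> x z)"
  define S where "S = (\<lambda>w. \<Prod>j<n. sgb (z!j \<and> w ! j))"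
  have lx: "length x = n" using assms(3) by (simp add: bitstrings_def)
  have inB: "\<And>a. a \<in> B \<Longrightarrow> xl x a \<in> B" using lx by (simp add: B_def bitstrings_def)
  have finB: "finite B" by (simp add: B_def)
  have U1: "\<And>a b. a \<in> B \<Longrightarrow> b \<in> B \<Longrightarrow> U (z, x) (a, b) = H z a * (if b = xl x a then 1 else 0)"
    unfolding U_def H_def B_def using circuit_entry xl_eq_iff lx
    by (simp add: bitstrings_def)
  have M: "mult2 n U \<sigma> (z, x) r = (\<Sum>a\<in>B. H z a * \<sigma> (a, xl x a) r)" for r
  proof -
    have "mult2 n U \<sigma> (z, x) r = (\<Sum>a\<in>B. \<Sum>b\<in>B. U (z, x) (a, b) * \<sigma> (a, b) r)"
      unfolding mult2_def B_def by (simp add: sum.cartesian_product)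
    also have "\<dots> = (\<Sum>a\<in>B. \<Sum>b\<in>B. if b = xl x a then H z a * \<sigma> (a, b) r else 0)"
      by (rule sum.cong[OF refl], rule sum.cong[OF refl]) (simp add: U1)
    also have "\<dots> = (\<Sum>a\<in>B. H z a * \<sigma> (a, xl x a) r)"
      by (rule sum.cong[OF refl]) (simp add: inB finB)
    finally show ?thesis .
  qed
  have "mult2 n (mult2 n U \<sigma>) (adj2 U) (z, x) (z, x)
      = (\<Sum>a'\<in>B. \<Sum>b'\<in>B. mult2 n U \<sigma> (z, x) (a', b') * cnj (U (z, x) (a', b')))"
    unfolding mult2_def[of n "mult2 n U \<sigma>"] adj2_def B_def by (simp add: sum.cartesian_product)
  also have "\<dots> = (\<Sum>a'\<in>B. \<Sum>b'\<in>B. if b' = xl x a' then mult2 n U \<sigma> (z, x) (a', b') * cnj (H z a') else 0)"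
    by (rule sum.cong[OF refl], rule sum.cong[OF refl]) (simp add: U1)
  also have "\<dots> = (\<Sum>a'\<in>B. mult2 n U \<sigma> (z, x) (a', xl x a') * cnj (H z a'))"
    by (rule sum.cong[OF refl]) (simp add: inB finB)
  also have "\<dots> = (\<Sum>a'\<in>B. \<Sum>a\<in>B. (H z a * cnj (H z a')) * \<rho> a a' * \<zeta> (xl x a) * cnj (\<zeta> (xl x a')))"
    unfolding M unfolding \<sigma>_def input_state_def by (simp add: sum_distrib_left sum_distrib_right mult_ac)
  also have "\<dots> = (\<Sum>a\<in>B. \<Sum>a'\<in>B. (H z a * cnj (H z a')) * \<rho> a a' * \<zeta> (xl x a) * cnj (\<zeta> (xl x a')))"
    by (rule sum.swap)
  also have "\<dots> = (\<Sum>a\<in>B. \<Sum>b\<in>B. (1/2^n) * (cnj (v a) * \<rho> a b * v b))"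
  proof (rule sum.cong[OF refl], rule sum.cong[OF refl])
    fix a b assume a: "a \<in> B" and b: "b \<in> B"
    have la: "length a = n" and lb: "length b = n" using a b by (auto simp: B_def bitstrings_def)
    have xa: "xl x a = xl a x" "xl x b = xl b x" using la lb lx by (auto intro: xl_comm)
    have va: "cnj (v a) = S (xl a x) * \<zeta> (xl a x)"
      using sg_prod[of "xl a x" n z] la lx
      by (simp add: v_def conj_vec_def zeta_xz_def pauliX_def pauliZ_def S_def xl_def)
    have vb: "v b = S (xl b x) * cnj (\<zeta> (xl b x))"
    proof -
      have "cnj (S (xl b x)) = S (xl b x)" by (simp add: S_def sgb_def if_distrib cong: if_cong)
      thus ?thesis
      using sg_prod[of "xl b x" n z] lb lx
      by (simp add: v_def conj_vec_def zeta_xz_def pauliX_def pauliZ_def S_def xl_def)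
    qed
    show "(H z a * cnj (H z b)) * \<rho> a b * \<zeta> (xl x a) * cnj (\<zeta> (xl x b))
        = (1/2^n) * (cnj (v a) * \<rho> a b * v b)"
      unfolding va vb xa H_def had[OF la lb lx] S_def by (simp add: mult_ac)
  qed
  also have "\<dots> = (1/2^n) * expval n \<rho> v"
    unfolding expval_def B_def by (simp add: sum_distrib_left)
  finally have val: "mult2 n (mult2 n U \<sigma>) (adj2 U) (z, x) (z, x) = (1/2^n) * expval n \<rho> v" .
  have "cnj (expval n \<rho> v) = expval n \<rho> v"
    using assms(1) hermitian_real unfolding is_density_def by blast
  hence "Im (expval n \<rho> v) = 0" by (metis cnj.sel(2) neg_equal_zero)
  hence im: "Im ((1/2^n) * expval n \<rho> v) = 0" by simp
  show ?thesis
    unfolding shadow_prob_def U_def[symmetric] \<sigma>_def[symmetric] val v_def[symmetric]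
    using im by (simp add: complex_eq_iff)
qed

end
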